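(* Let $\alpha\ge\tfrac12$ and $1\le p<\infty$. There is a constant $C>0$ depending only on $\alpha$ and $p$ such that for every measurable $f$ on $\mathbb{R}_+$, $\|f\|_{p,\infty}\le C\sup_{y\in\mathbb{R}_+}\Big(\int_{\mathbb{R}_+}|f|^p\,\tau_y\mathbf{1}_{[0,1]}\,d\omega_\alpha\Big)^{1/p}.$
   Context: Fix $\alpha\geq\tfrac12$. The Bessel–Kingman hypergroup is $(\mathbb{R}_+,*_\alpha)$ with Haar measure $\omega_\alpha(dz)=z^{2\alpha+1}dz$ and, for $x,y>0$, $\varepsilon_x*_\alpha\varepsilon_y(f)=\int_{|x-y|}^{x+y}K_\alpha(x,y,z)f(z)z^{2\alpha+1}dz$ with $K_\alpha(x,y,z)=C_\Gamma\frac{[(z^2-(x-y)^2)((x+y)^2-z^2)]^{\alpha-1/2}}{(xyz)^{2\alpha}}$, $C_\Gamma=\frac{\Gamma(\alpha+1)}{\Gamma(1/2)\Gamma(\alpha+1/2)2^{2\alpha-1}}$; $\varepsilon_0$ is the identity. The translation is $\tau_yf(x)=\varepsilon_x*_\alpha\varepsilon_y(f)$ (so $\tau_0f=f$). Let $I_n=[n-1,n)$, $\omega_n=\omega_\alpha(I_n)$, and $\|f\|_{p,\infty}=\sup_{n\ge1}\big(\frac1{\omega_n}\int_{I_n}|f|^pd\omega_\alpha\big)^{1/p}$. *)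

theory Defs
  imports "HOL-Analysis.Analysis"
begin

definition omega :: "real \<Rightarrow> real measure" where
  "omega a = density lborel (\<lambda>z. indicator {0..} z * ennreal (z powr (2*a+1)))"

definition C_Gamma :: "real \<Rightarrow> real" where
  "C_Gamma a = Gamma (a+1) / (Gamma (1/2) * Gamma (a+1/2) * 2 powr (2*a-1))"

definition K :: "real \<Rightarrow> real \<Rightarrow> real \<Rightarrow> real \<Rightarrow> real" where
  "K a x y z = C_Gamma a *
     ((z^2 - (x-y)^2) * ((x+y)^2 - z^2)) powr (a - 1/2) / (x*y*z) powr (2*a)"

text \<open>Generalized translation tau_y g (x) = (eps_x * eps_y)(g); eps_0 is the identity.\<close>
definition tau :: "real \<Rightarrow> real \<Rightarrow> (real \<Rightarrow> real) \<Rightarrow> real \<Rightarrow> real" where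
  "tau a y g x =
     (if y = 0 then g x
      else if x = 0 then g y
      else (LINT z:{\<bar>x-y\<bar>..x+y}|lborel. K a x y z * g z * z powr (2*a+1)))"

definition ennroot :: "real \<Rightarrow> ennreal \<Rightarrow> ennreal" where
  "ennroot p t = (if t = top then top else ennreal (enn2real t powr (1/p)))"

definition I :: "nat \<Rightarrow> real set" where
  "I n = {real n - 1 ..< real n}"

definition norm_p_inf :: "real \<Rightarrow> real \<Rightarrow> (real \<Rightarrow> real) \<Rightarrow> ennreal" where
  "norm_p_inf a p f = (SUP n\<in>{1..}. ennroot p
      (ennreal (1 / measure (omega a) (I n)) *
       (\<integral>\<^sup>+ x\<in>I n. ennreal (\<bar>f x\<bar> powr p) \<partial>omega a)))"

end

theory Submission
  imports Defs
begin


lemma CG_pos: "a \<ge> 1/2 \<Longrightarrow> C_Gamma a > 0"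
  unfolding C_Gamma_def by (intro divide_pos_pos mult_pos_pos) auto

lemma F_meas: "(\<lambda>z. K a x y z * indicator {0..1::real} z * z powr (2*a+1)) \<in> borel_measurable lborel"
  unfolding K_def by measurable

lemma F_bound:
  assumes a: "a \<ge> 1/2" and x: "x > 0" and y: "y > 0" and z: "z \<in> {\<bar>x-y\<bar>..x+y}"
  shows "norm (K a x y z * indicator {0..1::real} z * z powr (2*a+1))
     \<le> C_Gamma a * ((x+y)^4) powr (a-1/2) / (x*y) powr (2*a)"
proof (cases "z \<in> {0<..1}")
  case False
  then have "z = 0 \<or> z \<notin> {0..1}" by auto
  then show ?thesis using CG_pos[OF a] x y a by (auto simp: indicator_def)
next
  case True
  let ?B = "(z^2 - (x-y)^2) * ((x+y)^2 - z^2)"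
  have "\<bar>x-y\<bar>^2 \<le> z^2" using z by (intro power_mono) auto
  then have h1: "z^2 - (x-y)^2 \<ge> 0" by simp
  have "z^2 \<le> (x+y)^2" using z True by (intro power_mono) auto
  then have h2: "(x+y)^2 - z^2 \<ge> 0" by simp
  have h3: "z^2 - (x-y)^2 \<le> (x+y)^2" using h2 by (smt (verit) zero_le_power2)
  have h4: "(x+y)^2 - z^2 \<le> (x+y)^2" by simp
  have B0: "?B \<ge> 0" using h1 h2 by simp
  have "?B \<le> (x+y)^2 * (x+y)^2" using mult_mono[OF h3 h4] h1 h2 by simp
  then have B1: "?B \<le> (x+y)^4" by (simp add: power2_eq_square power4_eq_xxxx)
  have P: "?B powr (a-1/2) \<le> ((x+y)^4) powr (a-1/2)"
    using powr_mono2[OF _ B0 B1] a by simp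
  have zz: "(x*y*z) powr (2*a) = (x*y) powr (2*a) * z powr (2*a)"
    using x y True by (simp add: powr_mult)
  have zp: "z powr (2*a+1) = z powr (2*a) * z" using True by (simp add: powr_add)
  have zpos: "z powr (2*a) > 0" using True by simp
  have xyp: "(x*y) powr (2*a) > 0" using x y by simp
  have eq: "K a x y z * indicator {0..1::real} z * z powr (2*a+1)
      = C_Gamma a * ?B powr (a-1/2) / (x*y) powr (2*a) * z"
    using True zpos unfolding K_def zz zp by (simp add: indicator_def field_simps)
  have "C_Gamma a * ?B powr (a-1/2) / (x*y) powr (2*a) * z \<le> C_Gamma a * ((x+y)^4) powr (a-1/2) / (x*y) powr (2*a) * 1"
    apply (rule mult_mono)
    using P CG_pos[OF a] xyp True by (auto intro!: divide_right_mono mult_left_mono)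
  moreover have "C_Gamma a * ?B powr (a-1/2) / (x*y) powr (2*a) * z \<ge> 0"
    using CG_pos[OF a] xyp True by simp
  ultimately show ?thesis unfolding eq by simp
qed



lemma aux_arith: "(c::real) * (u * v) / w * t = c * u * t * (v / w)"
  by (simp add: divide_inverse mult_ac)

lemma F_nonneg: "a \<ge> 1/2 \<Longrightarrow> K a x y z * indicator {0..1::real} z * z powr (2*a+1) \<ge> 0"
  unfolding K_def using CG_pos[of a] by (auto intro!: mult_nonneg_nonneg divide_nonneg_nonneg)

lemma F_integrable:
  assumes a: "a \<ge> 1/2" and x: "x > 0" and y: "y > 0"
  shows "integrable lborel (\<lambda>z. indicator {\<bar>x-y\<bar>..x+y} z *\<^sub>R (K a x y z * indicator {0..1::real} z * z powr (2*a+1)))"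
  apply (rule integrableI_bounded_set_indicator[where B="C_Gamma a * ((x+y)^4) powr (a-1/2) / (x*y) powr (2*a)"])
  using F_meas F_bound[OF a x y] by (auto simp: emeasure_lborel_Icc_eq)

lemma F_lower:
  assumes a: "a \<ge> 1/2" and n: "n \<ge> (2::nat)" and x: "x \<in> I n" and y: "y = real n - 1/2"
    and z: "z \<in> {3/4..1::real}"
  shows "K a x y z * indicator {0..1::real} z * z powr (2*a+1)
     \<ge> C_Gamma a * (15/64) powr (a-1/2) * (3/4) powr (2*a+1) * real n powr (-(2*a+1))"
proof -
  have n2: "real n \<ge> 2" using n by simp
  have xb: "real n - 1 \<le> x" "x < real n" using x by (auto simp: I_def)
  have z0: "z > 0" "z \<le> 1" "z \<ge> 3/4" using z by auto
  let ?B = "(z^2 - (x-y)^2) * ((x+y)^2 - z^2)"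
  have xy: "\<bar>x-y\<bar> \<le> 1/2" using xb y unfolding abs_le_iff by linarith
  have "(x-y)^2 \<le> (1/2)^2" using xy by (metis abs_ge_zero power2_abs power_mono)
  moreover have "(3/4)^2 \<le> z^2" using z0 by (intro power_mono) auto
  ultimately have h1: "z^2 - (x-y)^2 \<ge> 5/16" by (simp add: power2_eq_square)
  have xyn: "x + y \<ge> real n" using xb y n2 by simp
  have "real n ^2 \<le> (x+y)^2" using xyn n2 by (intro power_mono) auto
  moreover have "z^2 \<le> 1" using z0 by (simp add: power_le_one)
  moreover have "real n^2 \<ge> 4" using n2 power_mono[of 2 "real n" 2] by simp
  ultimately have h2: "(x+y)^2 - z^2 \<ge> 3/4 * real n^2" by simp
  have B1: "?B \<ge> 15/64 * real n^2"
  proof -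
    have "5/16 * (3/4 * real n^2) \<le> ?B" using mult_mono[OF h1 h2] h1 by simp
    then show ?thesis by simp
  qed
  have e: "a - 1/2 \<ge> 0" using a by simp
  have P: "(15/64 * real n^2) powr (a-1/2) \<le> ?B powr (a-1/2)"
    using powr_mono2[OF e _ B1] by simp
  have P0: "(15/64 * real n^2) powr (a-1/2) = (15/64) powr (a-1/2) * real n powr (2*a-1)"
  proof -
    have "(15/64 * real n^2) powr (a-1/2) = (15/64) powr (a-1/2) * (real n^2) powr (a-1/2)"
      using powr_mult[of "15/64" "real n^2" "a-1/2"] by simp
    moreover have "real n^2 = real n powr 2" using n2 powr_realpow[of "real n" 2] by simp
    moreover have "(real n powr 2) powr (a-1/2) = real n powr (2*a-1)"
      unfolding powr_powr by (rule arg_cong[where f="\<lambda>t. real n powr t"]) (simp add: algebra_simps)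
    ultimately show ?thesis by (simp only:)
  qed
  have xp: "x > 0" "y > 0" "x < real n" "y < real n" using xb y n2 by auto
  have Q: "(x*y*z) powr (2*a) \<le> (real n * real n) powr (2*a)"
    apply (rule powr_mono2) using a apply simp using xp z0 apply simp
  proof -
    have "x*y \<le> real n * real n" using xp by (intro mult_mono) auto
    moreover have "x*y*z \<le> x*y" using xp z0 by (simp add: mult_left_le)
    ultimately show "x*y*z \<le> real n * real n" by linarith
  qed
  have Q0: "(real n * real n) powr (2*a) = real n powr (4*a)"
    using n2 by (simp add: powr_mult powr_add[symmetric])
  have Qp: "(x*y*z) powr (2*a) > 0" using xp z0 by simp
  have R: "(3/4) powr (2*a+1) \<le> z powr (2*a+1)" using z0 a by (intro powr_mono2) auto
  have c0: "C_Gamma a > 0" using CG_pos[OF a] .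
  have main: "C_Gamma a * ((15/64) powr (a-1/2) * real n powr (2*a-1)) / real n powr (4*a) * (3/4) powr (2*a+1)
     \<le> C_Gamma a * ?B powr (a-1/2) / (x*y*z) powr (2*a) * z powr (2*a+1)"
    apply (rule mult_mono[OF _ R])
      apply (rule frac_le)
    using c0 P P0 Qp Q Q0 by (auto intro!: mult_left_mono)
  have e1: "real n powr (2*a-1) / real n powr (4*a) = real n powr (-(2*a+1))"
    using n2 by (simp add: powr_diff[symmetric])
  have e2: "K a x y z * indicator {0..1::real} z * z powr (2*a+1)
      = C_Gamma a * ?B powr (a-1/2) / (x*y*z) powr (2*a) * z powr (2*a+1)"
    using z0 unfolding K_def indicator_def by simp
  have e3: "C_Gamma a * ((15/64) powr (a-1/2) * real n powr (2*a-1)) / real n powr (4*a) * (3/4) powr (2*a+1)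
     = C_Gamma a * (15/64) powr (a-1/2) * (3/4) powr (2*a+1) * (real n powr (2*a-1) / real n powr (4*a))"
    by (rule aux_arith)
  show ?thesis using main unfolding e2 e3 e1 .
qed



definition c1 :: "real \<Rightarrow> real" where
  "c1 a = C_Gamma a * (15/64) powr (a-1/2) * (3/4) powr (2*a+1) / 4"

lemma c1_pos: "a \<ge> 1/2 \<Longrightarrow> c1 a > 0"
  unfolding c1_def using CG_pos[of a] by simp

lemma tau_lower:
  assumes a: "a \<ge> 1/2" and n: "n \<ge> (2::nat)" and x: "x \<in> I n"
  shows "tau a (real n - 1/2) (indicator {0..1}) x \<ge> c1 a * real n powr (-(2*a+1))"
proof -
  define y where "y = real n - 1/2"
  have n2: "real n \<ge> 2" using n by simp
  have xb: "real n - 1 \<le> x" "x < real n" using x by (auto simp: I_def)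
  have xp: "x > 0" "y > 0" using xb n2 by (auto simp: y_def)
  let ?F = "\<lambda>z. K a x y z * indicator {0..1::real} z * z powr (2*a+1)"
  let ?S = "{\<bar>x-y\<bar>..x+y}"
  define L where "L = C_Gamma a * (15/64) powr (a-1/2) * (3/4) powr (2*a+1) * real n powr (-(2*a+1))"
  have xy: "\<bar>x-y\<bar> \<le> 1/2" using xb unfolding y_def abs_le_iff by linarith
  have "x + y \<ge> 1" using xb n2 y_def by linarith
  then have sub: "{3/4..1} \<subseteq> ?S" using xy by auto
  have int1: "integrable lborel (\<lambda>z. indicator {3/4..1::real} z *\<^sub>R L)"
    apply (rule integrableI_bounded_set_indicator[where B="\<bar>L\<bar>"])
    by (auto simp: emeasure_lborel_Icc_eq)
  have "(LINT z|lborel. indicator {3/4..1::real} z *\<^sub>R L) \<le> (LINT z|lborel. indicator ?S z *\<^sub>R ?F z)"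
  proof (rule integral_mono[OF int1 F_integrable[OF a xp]])
    fix z :: real
    show "indicator {3/4..1::real} z *\<^sub>R L \<le> indicator ?S z *\<^sub>R ?F z"
    proof (cases "z \<in> {3/4..1}")
      case True
      then have "z \<in> ?S" using sub by auto
      then show ?thesis using True F_lower[OF a n x y_def True] by (simp add: L_def)
    next
      case False
      then have "indicator {3/4..1::real} z *\<^sub>R L = 0" by simp
      moreover have "indicator ?S z *\<^sub>R ?F z \<ge> 0" using F_nonneg[OF a, of x y z] by simp
      ultimately show ?thesis by linarith
    qed
  qed
  moreover have "(LINT z|lborel. indicator {3/4..1::real} z *\<^sub>R L) = L / 4"
    using set_integral_const[of "{3/4..1::real}" lborel L]
    by (simp add: set_lebesgue_integral_def emeasure_lborel_Icc_eq)
  moreover have "tau a y (indicator {0..1}) x = (LINT z|lborel. indicator ?S z *\<^sub>R ?F z)"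
    using xp unfolding tau_def set_lebesgue_integral_def by simp
  ultimately show ?thesis unfolding y_def[symmetric] L_def c1_def by simp
qed



lemma omega_emeasure: "emeasure (omega a) A = (\<integral>\<^sup>+ z\<in>A. indicator {0..} z * ennreal (z powr (2*a+1)) \<partial>lborel)"
  if "A \<in> sets borel" for A
  unfolding omega_def using that by (subst emeasure_density) auto

lemma I_sets[measurable]: "I n \<in> sets borel" unfolding I_def by simp

lemma omega_I:
  assumes a: "a \<ge> 1/2" and n: "n \<ge> (1::nat)"
  shows "emeasure (omega a) (I n) < \<infinity>" "measure (omega a) (I n) \<ge> 1/2 * (real n / 2) powr (2*a+1)"
proof -
  have n1: "real n \<ge> 1" using n by simp
  have up: "emeasure (omega a) (I n) \<le> (\<integral>\<^sup>+ z. ennreal (real n powr (2*a+1)) * indicator (I n) z \<partial>lborel)"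
    unfolding omega_emeasure[OF I_sets]
  proof (rule nn_integral_mono)
    fix z :: real
    show "indicator {0..} z * ennreal (z powr (2*a+1)) * indicator (I n) z
       \<le> ennreal (real n powr (2*a+1)) * indicator (I n) z"
    proof (cases "z \<in> I n \<and> z \<ge> 0")
      case True
      then have "z powr (2*a+1) \<le> real n powr (2*a+1)" using a
        by (intro powr_mono2) (auto simp: I_def)
      then show ?thesis using True by (simp add: ennreal_leI)
    next
      case False
      then show ?thesis by (auto simp: indicator_def)
    qed
  qed
  also have "\<dots> = ennreal (real n powr (2*a+1)) * emeasure lborel (I n)"
    by (rule nn_integral_cmult_indicator) simp
  also have "\<dots> = ennreal (real n powr (2*a+1))"
  proof -
    have "emeasure lborel (I n) = ennreal (real n - (real n - 1))"
      unfolding I_def by (rule emeasure_lborel_Ico) simp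
    then have "emeasure lborel (I n) = 1" by simp
    then show ?thesis by simp
  qed
  finally have le: "emeasure (omega a) (I n) \<le> ennreal (real n powr (2*a+1))" .
  show fin: "emeasure (omega a) (I n) < \<infinity>"
    using le_less_trans[OF le ennreal_less_top] by simp
  have lo: "(\<integral>\<^sup>+ z. ennreal ((real n / 2) powr (2*a+1)) * indicator {real n - 1/2..<real n} z \<partial>lborel)
      \<le> emeasure (omega a) (I n)"
    unfolding omega_emeasure[OF I_sets]
  proof (rule nn_integral_mono)
    fix z :: real
    show "ennreal ((real n / 2) powr (2*a+1)) * indicator {real n - 1/2..<real n} z
       \<le> indicator {0..} z * ennreal (z powr (2*a+1)) * indicator (I n) z"
    proof (cases "z \<in> {real n - 1/2..<real n}")
      case True
      then have z: "z \<ge> real n / 2" "z \<in> I n" "z \<ge> 0" using n1 by (auto simp: I_def)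
      then have "(real n / 2) powr (2*a+1) \<le> z powr (2*a+1)" using a
        by (intro powr_mono2) auto
      then show ?thesis using True z by (simp add: ennreal_leI)
    next
      case False
      then show ?thesis by simp
    qed
  qed
  have "(\<integral>\<^sup>+ z. ennreal ((real n / 2) powr (2*a+1)) * indicator {real n - 1/2..<real n} z \<partial>lborel)
     = ennreal ((real n / 2) powr (2*a+1)) * emeasure lborel {real n - 1/2..<real n}"
    by (rule nn_integral_cmult_indicator) simp
  also have "\<dots> = ennreal (1/2 * (real n / 2) powr (2*a+1))"
  proof -
    have "emeasure lborel {real n - 1/2..<real n} = ennreal (real n - (real n - 1/2))"
      by (rule emeasure_lborel_Ico) simp
    then have "emeasure lborel {real n - 1/2..<real n} = ennreal (1/2)" by simp
    then show ?thesis
      using ennreal_mult[of "(real n / 2) powr (2*a+1)" "1/2"] by (simp add: mult.commute)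
  qed
  finally have "ennreal (1/2 * (real n / 2) powr (2*a+1)) \<le> emeasure (omega a) (I n)"
    using lo by simp
  then show "measure (omega a) (I n) \<ge> 1/2 * (real n / 2) powr (2*a+1)"
  proof -
    have "enn2real (ennreal (1/2 * (real n / 2) powr (2*a+1))) \<le> enn2real (emeasure (omega a) (I n))"
      by (rule enn2real_mono[OF \<open>ennreal _ \<le> _\<close>]) (use fin in simp)
    then show ?thesis unfolding measure_def by simp
  qed
qed



definition DD :: "real \<Rightarrow> real" where
  "DD a = 2 * 2 powr (2*a+1) * max 1 (1 / c1 a)"

lemma DD_pos: "a \<ge> 1/2 \<Longrightarrow> DD a > 0"
  unfolding DD_def by (intro mult_pos_pos) auto

lemma aux2: "(A::real) > 0 \<Longrightarrow> B > 0 \<Longrightarrow> 1/(1/2*(A/B)) = 2*B/A"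
  by (simp add: field_simps)

lemma key:
  assumes a: "a \<ge> 1/2" and n: "n \<ge> (1::nat)"
  shows "\<exists>y\<ge>0. \<forall>x\<in>I n. 1 / measure (omega a) (I n) \<le> DD a * tau a y (indicator {0..1}) x"
proof -
  define E where "E = 2*a+1"
  define M0 where "M0 = 1/2 * (real n / 2) powr E"
  have n1: "real n \<ge> 1" using n by simp
  have M0p: "M0 > 0" using n1 by (simp add: M0_def)
  have mM: "measure (omega a) (I n) \<ge> M0" using omega_I(2)[OF a n] by (simp add: M0_def E_def)
  have b1: "1 / measure (omega a) (I n) \<le> 1 / M0"
    using mM M0p by (intro divide_left_mono) auto
  have npos: "real n powr E > 0" using n1 by simp
  have "1 / M0 = 2 * 2 powr E / real n powr E"
    unfolding M0_def powr_divide by (rule aux2[OF npos]) simp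
  also have "\<dots> = 2 * 2 powr E * real n powr (-E)"
    by (simp add: powr_minus divide_inverse)
  finally have b2: "1 / M0 = 2 * 2 powr E * real n powr (-E)" .
  have c1p: "c1 a > 0" using c1_pos[OF a] .
  have mx: "max 1 (1 / c1 a) * c1 a \<ge> 1" using c1p
  proof -
    have "max 1 (1 / c1 a) * c1 a \<ge> (1 / c1 a) * c1 a" using c1p by (intro mult_right_mono) auto
    moreover have "(1 / c1 a) * c1 a = 1" using c1p by simp
    ultimately show ?thesis by simp
  qed
  have mx1: "max 1 (1 / c1 a) \<ge> 1" by simp
  show ?thesis
  proof (cases "n = 1")
    case True
    show ?thesis
    proof (intro exI[of _ 0] conjI ballI)
      fix x assume x: "x \<in> I n"
      then have "tau a 0 (indicator {0..1}) x = 1" using True by (simp add: tau_def I_def)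
      moreover have "1 / M0 \<le> DD a"
        unfolding b2 DD_def E_def using True mx1 by simp
      ultimately show "1 / measure (omega a) (I n) \<le> DD a * tau a 0 (indicator {0..1}) x"
        using b1 by simp
    qed simp
  next
    case False
    then have n2: "n \<ge> 2" using n by simp
    show ?thesis
    proof (intro exI[of _ "real n - 1/2"] conjI ballI)
      show "real n - 1/2 \<ge> 0" using n1 by simp
      fix x assume x: "x \<in> I n"
      have t: "tau a (real n - 1/2) (indicator {0..1}) x \<ge> c1 a * real n powr (-E)"
        using tau_lower[OF a n2 x] by (simp add: E_def)
      have "DD a * tau a (real n - 1/2) (indicator {0..1}) x \<ge> DD a * (c1 a * real n powr (-E))"
        using t DD_pos[OF a] by (intro mult_left_mono) auto
      moreover have "DD a * (c1 a * real n powr (-E)) = 2 * 2 powr E * real n powr (-E) * (max 1 (1 / c1 a) * c1 a)"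
        unfolding DD_def E_def by (simp add: ac_simps)
      moreover have "2 * 2 powr E * real n powr (-E) * (max 1 (1 / c1 a) * c1 a) \<ge> 2 * 2 powr E * real n powr (-E)"
        using mult_left_mono[OF mx, of "2 * 2 powr E * real n powr (-E)"] by simp
      ultimately show "1 / measure (omega a) (I n) \<le> DD a * tau a (real n - 1/2) (indicator {0..1}) x"
        using b1 b2 by linarith
    qed
  qed
qed

lemma ennroot_mono:
  assumes "p > 0" "s \<le> t" shows "ennroot p s \<le> ennroot p t"
proof (cases "t = top")
  case True then show ?thesis by (simp add: ennroot_def)
next
  case False
  then have "s \<noteq> top" using assms(2) top.extremum_unique by auto
  moreover have "enn2real s \<le> enn2real t" using assms(2) False enn2real_mono top.not_eq_extremum by blast
  ultimately show ?thesis using False assms(1) unfolding ennroot_def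
    by (auto intro!: ennreal_leI powr_mono2)
qed

lemma ennroot_cmult:
  assumes "p > 0" "D > 0" shows "ennroot p (ennreal D * t) = ennreal (D powr (1/p)) * ennroot p t"
proof (cases "t = top")
  case True then show ?thesis using assms by (simp add: ennroot_def ennreal_mult_top)
next
  case False
  then obtain r where r: "t = ennreal r" "r \<ge> 0" by (cases t) auto
  have e: "ennreal D * t = ennreal (D * r)" using r assms by (simp add: ennreal_mult)
  have "ennroot p (ennreal D * t) = ennreal ((D*r) powr (1/p))"
    unfolding e ennroot_def using r assms by simp
  also have "\<dots> = ennreal (D powr (1/p)) * ennreal (r powr (1/p))"
    using r assms by (simp add: powr_mult ennreal_mult)
  also have "ennreal (r powr (1/p)) = ennroot p t"
    unfolding ennroot_def using r by simp
  finally show ?thesis .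
qed

lemma sets_omega: "sets (omega a) = sets borel" by (simp add: omega_def)

lemma meas_omega: "g \<in> borel_measurable borel \<Longrightarrow> g \<in> borel_measurable (omega a)"
  using measurable_cong_sets[OF sets_omega refl] by blast



theorem mainTheorem2:
  fixes a p :: real
  assumes "a \<ge> 1/2" and "1 \<le> p"
  shows "\<exists>C>0. \<forall>f :: real \<Rightarrow> real. f \<in> borel_measurable borel \<longrightarrow>
           norm_p_inf a p f \<le> ennreal C *
             (SUP y\<in>{0..}. ennroot p
                (\<integral>\<^sup>+ x. ennreal (\<bar>f x\<bar> powr p * tau a y (indicator {0..1}) x) \<partial>omega a))"
proof -
  have a: "a \<ge> 1/2" and p: "p > 0" using assms by auto
  define D where "D = DD a"
  have Dp: "D > 0" using DD_pos[OF a] by (simp add: D_def)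
  show ?thesis
  proof (intro exI[of _ "D powr (1/p)"] conjI allI impI)
    show "D powr (1/p) > 0" using Dp by simp
    fix f :: "real \<Rightarrow> real" assume fm: "f \<in> borel_measurable borel"
    let ?R = "\<lambda>y. \<integral>\<^sup>+ x. ennreal (\<bar>f x\<bar> powr p * tau a y (indicator {0..1}) x) \<partial>omega a"
    let ?S = "SUP y\<in>{0..}. ennroot p (?R y)"
    show "norm_p_inf a p f \<le> ennreal (D powr (1/p)) * ?S"
      unfolding norm_p_inf_def
    proof (rule SUP_least)
      fix n :: nat assume "n \<in> {1..}"
      then have n: "n \<ge> 1" by simp
      obtain y where y: "y \<ge> 0" and yb: "\<And>x. x \<in> I n \<Longrightarrow> 1 / measure (omega a) (I n) \<le> D * tau a y (indicator {0..1}) x"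
        using key[OF a n] unfolding D_def by blast
      define w where "w = measure (omega a) (I n)"
      have "1/2 * (real n/2) powr (2*a+1) > 0" using n by simp
      then have wp: "w > 0" unfolding w_def using omega_I(2)[OF a n] by linarith
      have hm: "(\<lambda>x. ennreal (\<bar>f x\<bar> powr p) * indicator (I n) x) \<in> borel_measurable (omega a)"
        by (rule meas_omega) (use fm in measurable)
      have "ennreal (1 / w) * (\<integral>\<^sup>+ x\<in>I n. ennreal (\<bar>f x\<bar> powr p) \<partial>omega a)
          = (\<integral>\<^sup>+ x. ennreal (1 / w) * (ennreal (\<bar>f x\<bar> powr p) * indicator (I n) x) \<partial>omega a)"
        by (rule nn_integral_cmult[OF hm, symmetric])
      also have "\<dots> = (\<integral>\<^sup>+ x. ennreal D * (ennreal (1 / (D * w)) * (ennreal (\<bar>f x\<bar> powr p) * indicator (I n) x)) \<partial>omega a)"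
      proof -
        have "ennreal D * ennreal (1 / (D * w)) = ennreal (1 / w)"
          using Dp wp by (simp add: ennreal_mult[symmetric])
        then show ?thesis by (simp add: mult.assoc[symmetric])
      qed
      also have "\<dots> = ennreal D * (\<integral>\<^sup>+ x. ennreal (1 / (D * w)) * (ennreal (\<bar>f x\<bar> powr p) * indicator (I n) x) \<partial>omega a)"
        by (rule nn_integral_cmult) (use hm in measurable)
      also have "\<dots> \<le> ennreal D * ?R y"
      proof (intro mult_left_mono nn_integral_mono)
        fix x
        show "ennreal (1 / (D * w)) * (ennreal (\<bar>f x\<bar> powr p) * indicator (I n) x)
            \<le> ennreal (\<bar>f x\<bar> powr p * tau a y (indicator {0..1}) x)"
        proof (cases "x \<in> I n")
          case True
          have "1 / (D * w) \<le> tau a y (indicator {0..1}) x"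
            using yb[OF True] Dp wp unfolding w_def[symmetric] by (simp add: field_simps)
          then have "1 / (D * w) * \<bar>f x\<bar> powr p \<le> \<bar>f x\<bar> powr p * tau a y (indicator {0..1}) x"
            using mult_left_mono[OF _ powr_ge_zero, of "1 / (D * w)" _ "\<bar>f x\<bar>" p]
            by (metis mult.commute)
          then show ?thesis using True Dp wp by (simp add: ennreal_mult[symmetric] ennreal_leI)
        next
          case False then show ?thesis by simp
        qed
      qed simp
      finally have le: "ennreal (1 / w) * (\<integral>\<^sup>+ x\<in>I n. ennreal (\<bar>f x\<bar> powr p) \<partial>omega a) \<le> ennreal D * ?R y" .
      have "ennroot p (ennreal (1 / w) * (\<integral>\<^sup>+ x\<in>I n. ennreal (\<bar>f x\<bar> powr p) \<partial>omega a))
          \<le> ennroot p (ennreal D * ?R y)"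
        by (rule ennroot_mono[OF p le])
      also have "\<dots> = ennreal (D powr (1/p)) * ennroot p (?R y)"
        by (rule ennroot_cmult[OF p Dp])
      also have "\<dots> \<le> ennreal (D powr (1/p)) * ?S"
        by (intro mult_left_mono SUP_upper) (use y in auto)
      finally show "ennroot p (ennreal (1 / measure (omega a) (I n)) * (\<integral>\<^sup>+ x\<in>I n. ennreal (\<bar>f x\<bar> powr p) \<partial>omega a))
          \<le> ennreal (D powr (1/p)) * ?S" unfolding w_def .
    qed
  qed
qed


end
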